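(* Let $R$ be a commutative ring, $E$ a simple $R$-module, $D$ a finitely generated $R$-module and $M=E\oplus D$. The following are equivalent: (a) $E$ is strongly hollow in $M$; (b) every submodule $N$ of $M$ either contains $E$ or is contained in $D$; (c) $R=\mathrm{Ann}(E)+\mathrm{Ann}(D)$; (d) $\mathrm{Ann}(D)\not\subseteq\mathrm{Ann}(E)$.
   Context: A submodule $N$ of $M$ is strongly hollow in $M$ if for all submodules $K,L$ of $M$, $N\subseteq K+L$ implies $N\subseteq K$ or $N\subseteq L$. $\mathrm{Ann}(X)=\{r\in R\mid rX=0\}$. *)

theory Defs
  imports "HOL-Algebra.Algebra"
begin

text \<open>Submodules of M contained in a submodule E are exactly the submodules of E.\<close>

definition simple_submodule :: "('a, 'c) ring_scheme \<Rightarrow> ('a, 'b, 'd) module_scheme \<Rightarrow> 'b set \<Rightarrow> bool" where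
  "simple_submodule R M E \<longleftrightarrow> submodule E R M \<and> E \<noteq> {\<zero>\<^bsub>M\<^esub>} \<and>
     (\<forall>N. submodule N R M \<and> N \<subseteq> E \<longrightarrow> N = {\<zero>\<^bsub>M\<^esub>} \<or> N = E)"

definition generated_submodule :: "('a, 'c) ring_scheme \<Rightarrow> ('a, 'b, 'd) module_scheme \<Rightarrow> 'b set \<Rightarrow> 'b set" where
  "generated_submodule R M S = \<Inter>{N. submodule N R M \<and> S \<subseteq> N}"

definition finitely_generated_submodule :: "('a, 'c) ring_scheme \<Rightarrow> ('a, 'b, 'd) module_scheme \<Rightarrow> 'b set \<Rightarrow> bool" where
  "finitely_generated_submodule R M D \<longleftrightarrow> submodule D R M \<and>
     (\<exists>S. finite S \<and> S \<subseteq> D \<and> generated_submodule R M S = D)"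

definition strongly_hollow :: "('a, 'c) ring_scheme \<Rightarrow> ('a, 'b, 'd) module_scheme \<Rightarrow> 'b set \<Rightarrow> bool" where
  "strongly_hollow R M N \<longleftrightarrow>
     (\<forall>K L. submodule K R M \<and> submodule L R M \<and> N \<subseteq> K <+>\<^bsub>M\<^esub> L \<longrightarrow> N \<subseteq> K \<or> N \<subseteq> L)"

definition Ann :: "('a, 'c) ring_scheme \<Rightarrow> ('a, 'b, 'd) module_scheme \<Rightarrow> 'b set \<Rightarrow> 'a set" where
  "Ann R M S = {r. r \<in> carrier R \<and> (\<forall>x\<in>S. r \<odot>\<^bsub>M\<^esub> x = \<zero>\<^bsub>M\<^esub>)}"

end

theory Submission
  imports Defs
begin

locale ED = module R M for R and M +
  fixes E D
  assumes simpE: "simple_submodule R M E"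
    and fgD: "finitely_generated_submodule R M D"
    and intED: "E \<inter> D = {\<zero>\<^bsub>M\<^esub>}"
    and sumED: "E <+>\<^bsub>M\<^esub> D = carrier M"
begin

lemma E_sub: "submodule E R M" using simpE unfolding simple_submodule_def by auto
lemma D_sub: "submodule D R M" using fgD unfolding finitely_generated_submodule_def by auto
lemma E_carr: "E \<subseteq> carrier M" using submoduleE(1)[OF E_sub] .
lemma D_carr: "D \<subseteq> carrier M" using submoduleE(1)[OF D_sub] .
lemma E_smult: "a \<in> carrier R \<Longrightarrow> x \<in> E \<Longrightarrow> a \<odot>\<^bsub>M\<^esub> x \<in> E"
  using submoduleE(4)[OF E_sub] by blast
lemma D_smult: "a \<in> carrier R \<Longrightarrow> x \<in> D \<Longrightarrow> a \<odot>\<^bsub>M\<^esub> x \<in> D"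
  using submoduleE(4)[OF D_sub] by blast
lemma E_add: "a \<in> E \<Longrightarrow> b \<in> E \<Longrightarrow> a \<oplus>\<^bsub>M\<^esub> b \<in> E"
  using submoduleE(5)[OF E_sub] by blast
lemma D_add: "a \<in> D \<Longrightarrow> b \<in> D \<Longrightarrow> a \<oplus>\<^bsub>M\<^esub> b \<in> D"
  using submoduleE(5)[OF D_sub] by blast
lemma E_inv: "a \<in> E \<Longrightarrow> \<ominus>\<^bsub>M\<^esub> a \<in> E"
  using submoduleE(3)[OF E_sub] by blast
lemma D_inv: "a \<in> D \<Longrightarrow> \<ominus>\<^bsub>M\<^esub> a \<in> D"
  using submoduleE(3)[OF D_sub] by blast

lemma E_ne: "\<exists>y\<in>E. y \<noteq> \<zero>\<^bsub>M\<^esub>"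
proof -
  have "\<zero>\<^bsub>M\<^esub> \<in> E" using E_sub submodule.axioms(1) subgroup.one_closed by fastforce
  moreover have "E \<noteq> {\<zero>\<^bsub>M\<^esub>}" using simpE unfolding simple_submodule_def by auto
  ultimately show ?thesis by blast
qed

lemma cyc_sub:
  assumes z: "z \<in> carrier M"
  shows "submodule ((\<lambda>a. a \<odot>\<^bsub>M\<^esub> z) ` carrier R) R M"
proof (rule submoduleI)
  show "(\<lambda>a. a \<odot>\<^bsub>M\<^esub> z) ` carrier R \<subseteq> carrier M" using z by auto
  show "\<zero>\<^bsub>M\<^esub> \<in> (\<lambda>a. a \<odot>\<^bsub>M\<^esub> z) ` carrier R"
    using z by (metis R.zero_closed image_eqI smult_l_null)
  show "\<ominus>\<^bsub>M\<^esub> a \<in> (\<lambda>a. a \<odot>\<^bsub>M\<^esub> z) ` carrier R" if "a \<in> (\<lambda>a. a \<odot>\<^bsub>M\<^esub> z) ` carrier R" for a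
    using that z by (auto simp: smult_l_minus[symmetric])
  show "a \<oplus>\<^bsub>M\<^esub> b \<in> (\<lambda>a. a \<odot>\<^bsub>M\<^esub> z) ` carrier R"
    if "a \<in> (\<lambda>a. a \<odot>\<^bsub>M\<^esub> z) ` carrier R" "b \<in> (\<lambda>a. a \<odot>\<^bsub>M\<^esub> z) ` carrier R" for a b
    using that z by (auto simp: smult_l_distr[symmetric])
  show "a \<odot>\<^bsub>M\<^esub> x \<in> (\<lambda>a. a \<odot>\<^bsub>M\<^esub> z) ` carrier R"
    if "a \<in> carrier R" "x \<in> (\<lambda>a. a \<odot>\<^bsub>M\<^esub> z) ` carrier R" for a x
    using that z by (auto simp: smult_assoc1[symmetric])
qed

lemma cyc:
  assumes y: "y \<in> E" "y \<noteq> \<zero>\<^bsub>M\<^esub>"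
  shows "E = (\<lambda>a. a \<odot>\<^bsub>M\<^esub> y) ` carrier R"
proof -
  let ?H = "(\<lambda>a. a \<odot>\<^bsub>M\<^esub> y) ` carrier R"
  have yc: "y \<in> carrier M" using y E_carr by auto
  have "submodule ?H R M" using cyc_sub[OF yc] .
  moreover have "?H \<subseteq> E" using E_smult y by auto
  moreover have "y \<in> ?H" using yc by (metis R.one_closed image_eqI smult_one)
  ultimately show ?thesis using simpE y unfolding simple_submodule_def by blast
qed

lemma decomp:
  assumes "x \<in> carrier M"
  shows "\<exists>e\<in>E. \<exists>d\<in>D. x = e \<oplus>\<^bsub>M\<^esub> d"
  using assms sumED unfolding set_add_def' by blast

lemma id_on_E:
  assumes y: "y \<in> E" "y \<noteq> \<zero>\<^bsub>M\<^esub>" and r: "r \<in> carrier R" and ry: "r \<odot>\<^bsub>M\<^esub> y = y"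
  shows "\<forall>z\<in>E. r \<odot>\<^bsub>M\<^esub> z = z"
proof
  fix z assume "z \<in> E"
  then obtain a where a: "a \<in> carrier R" "z = a \<odot>\<^bsub>M\<^esub> y" using cyc[OF y] by auto
  have yc: "y \<in> carrier M" using y E_carr by auto
  have "r \<odot>\<^bsub>M\<^esub> z = (r \<otimes>\<^bsub>R\<^esub> a) \<odot>\<^bsub>M\<^esub> y" using a r yc by (simp add: smult_assoc1)
  also have "\<dots> = (a \<otimes>\<^bsub>R\<^esub> r) \<odot>\<^bsub>M\<^esub> y" using a r by (simp add: R.m_comm)
  also have "\<dots> = z" using a r yc ry by (simp add: smult_assoc1)
  finally show "r \<odot>\<^bsub>M\<^esub> z = z" .
qed

lemma ba:
  assumes SH: "strongly_hollow R M E"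
  shows "\<forall>N. submodule N R M \<longrightarrow> E \<subseteq> N \<or> N \<subseteq> D"
proof (rule ccontr)
  assume "\<not> ?thesis"
  then obtain N where N: "submodule N R M" "\<not> E \<subseteq> N" "\<not> N \<subseteq> D" by blast
  then obtain n where n: "n \<in> N" "n \<notin> D" by blast
  have nc: "n \<in> carrier M" using n N(1) submoduleE(1) by blast
  obtain e d where ed: "e \<in> E" "d \<in> D" "n = e \<oplus>\<^bsub>M\<^esub> d" using decomp[OF nc] by blast
  have ec: "e \<in> carrier M" and dc: "d \<in> carrier M" using ed E_carr D_carr by auto
  have e0: "e \<noteq> \<zero>\<^bsub>M\<^esub>" using ed n dc by auto
  have en: "e = n \<oplus>\<^bsub>M\<^esub> (\<ominus>\<^bsub>M\<^esub> d)" using ed ec dc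
    by (simp add: M.add.m_assoc M.r_neg)
  have "E \<subseteq> N <+>\<^bsub>M\<^esub> D"
  proof
    fix z assume "z \<in> E"
    then obtain a where a: "a \<in> carrier R" "z = a \<odot>\<^bsub>M\<^esub> e" using cyc[OF ed(1) e0] by auto
    have "z = a \<odot>\<^bsub>M\<^esub> n \<oplus>\<^bsub>M\<^esub> a \<odot>\<^bsub>M\<^esub> (\<ominus>\<^bsub>M\<^esub> d)"
      using a en nc dc by (simp add: smult_r_distr)
    moreover have "a \<odot>\<^bsub>M\<^esub> n \<in> N" using a n N(1) submoduleE(4) by blast
    moreover have "a \<odot>\<^bsub>M\<^esub> (\<ominus>\<^bsub>M\<^esub> d) \<in> D" using a ed D_inv D_smult by blast
    ultimately show "z \<in> N <+>\<^bsub>M\<^esub> D" unfolding set_add_def' by blast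
  qed
  hence "E \<subseteq> N \<or> E \<subseteq> D" using SH N(1) D_sub unfolding strongly_hollow_def by blast
  moreover have "\<not> E \<subseteq> D" using intED ed e0 by blast
  ultimately show False using N by blast
qed

lemma ab:
  assumes B: "\<forall>N. submodule N R M \<longrightarrow> E \<subseteq> N \<or> N \<subseteq> D"
  shows "strongly_hollow R M E"
  unfolding strongly_hollow_def
proof (intro allI impI)
  fix K L assume H: "submodule K R M \<and> submodule L R M \<and> E \<subseteq> K <+>\<^bsub>M\<^esub> L"
  show "E \<subseteq> K \<or> E \<subseteq> L"
  proof (rule ccontr)
    assume "\<not> ?thesis"
    hence "K \<subseteq> D" "L \<subseteq> D" using B H by blast+
    hence "K <+>\<^bsub>M\<^esub> L \<subseteq> D" unfolding set_add_def' using D_add by blast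
    hence "E \<subseteq> D" using H by blast
    thus False using intED E_ne by blast
  qed
qed

lemma cb:
  assumes C: "carrier R = Ann R M E <+>\<^bsub>R\<^esub> Ann R M D"
  shows "\<forall>N. submodule N R M \<longrightarrow> E \<subseteq> N \<or> N \<subseteq> D"
proof (intro allI impI)
  fix N assume N: "submodule N R M"
  show "E \<subseteq> N \<or> N \<subseteq> D"
  proof (rule ccontr)
    assume neg: "\<not> ?thesis"
    then obtain n where n: "n \<in> N" "n \<notin> D" by blast
    have nc: "n \<in> carrier M" using n N submoduleE(1) by blast
    obtain e d where ed: "e \<in> E" "d \<in> D" "n = e \<oplus>\<^bsub>M\<^esub> d" using decomp[OF nc] by blast
    have ec: "e \<in> carrier M" and dc: "d \<in> carrier M" using ed E_carr D_carr by auto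
    have e0: "e \<noteq> \<zero>\<^bsub>M\<^esub>" using ed n dc by auto
    have "\<one>\<^bsub>R\<^esub> \<in> Ann R M E <+>\<^bsub>R\<^esub> Ann R M D" using C by auto
    then obtain a b where ab: "a \<in> Ann R M E" "b \<in> Ann R M D" "\<one>\<^bsub>R\<^esub> = a \<oplus>\<^bsub>R\<^esub> b"
      unfolding set_add_def' by blast
    have ar: "a \<in> carrier R" and br: "b \<in> carrier R" using ab unfolding Ann_def by auto
    have ae: "a \<odot>\<^bsub>M\<^esub> e = \<zero>\<^bsub>M\<^esub>" using ab ed unfolding Ann_def by auto
    have bd: "b \<odot>\<^bsub>M\<^esub> d = \<zero>\<^bsub>M\<^esub>" using ab ed unfolding Ann_def by auto
    have "e = \<one>\<^bsub>R\<^esub> \<odot>\<^bsub>M\<^esub> e" using ec by simp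
    also have "\<dots> = b \<odot>\<^bsub>M\<^esub> e" using ab ar br ec ae by (simp add: smult_l_distr)
    also have "\<dots> = b \<odot>\<^bsub>M\<^esub> n" using ed br ec dc bd by (simp add: smult_r_distr)
    finally have "e \<in> N" using br n N submoduleE(4) by metis
    hence "E \<subseteq> N" using cyc[OF ed(1) e0] N submoduleE(4) by blast
    thus False using neg by blast
  qed
qed

lemma ann_sub:
  assumes r: "r \<in> carrier R"
  shows "submodule {w \<in> carrier M. r \<odot>\<^bsub>M\<^esub> w = \<zero>\<^bsub>M\<^esub>} R M"
proof (rule submoduleI)
  show "{w \<in> carrier M. r \<odot>\<^bsub>M\<^esub> w = \<zero>\<^bsub>M\<^esub>} \<subseteq> carrier M" by auto
  show "\<zero>\<^bsub>M\<^esub> \<in> {w \<in> carrier M. r \<odot>\<^bsub>M\<^esub> w = \<zero>\<^bsub>M\<^esub>}" using r by simp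
  show "\<ominus>\<^bsub>M\<^esub> a \<in> {w \<in> carrier M. r \<odot>\<^bsub>M\<^esub> w = \<zero>\<^bsub>M\<^esub>}"
    if "a \<in> {w \<in> carrier M. r \<odot>\<^bsub>M\<^esub> w = \<zero>\<^bsub>M\<^esub>}" for a
    using that r by (simp add: smult_r_minus)
  show "a \<oplus>\<^bsub>M\<^esub> b \<in> {w \<in> carrier M. r \<odot>\<^bsub>M\<^esub> w = \<zero>\<^bsub>M\<^esub>}"
    if "a \<in> {w \<in> carrier M. r \<odot>\<^bsub>M\<^esub> w = \<zero>\<^bsub>M\<^esub>}" "b \<in> {w \<in> carrier M. r \<odot>\<^bsub>M\<^esub> w = \<zero>\<^bsub>M\<^esub>}" for a b
    using that r by (simp add: smult_r_distr)
  show "a \<odot>\<^bsub>M\<^esub> x \<in> {w \<in> carrier M. r \<odot>\<^bsub>M\<^esub> w = \<zero>\<^bsub>M\<^esub>}"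
    if "a \<in> carrier R" "x \<in> {w \<in> carrier M. r \<odot>\<^bsub>M\<^esub> w = \<zero>\<^bsub>M\<^esub>}" for a x
  proof -
    have "r \<odot>\<^bsub>M\<^esub> (a \<odot>\<^bsub>M\<^esub> x) = (r \<otimes>\<^bsub>R\<^esub> a) \<odot>\<^bsub>M\<^esub> x" using that r by (simp add: smult_assoc1)
    also have "\<dots> = (a \<otimes>\<^bsub>R\<^esub> r) \<odot>\<^bsub>M\<^esub> x" using that r by (simp add: R.m_comm)
    also have "\<dots> = \<zero>\<^bsub>M\<^esub>" using that r by (simp add: smult_assoc1)
    finally show ?thesis using that by simp
  qed
qed

lemma bd:
  assumes B: "\<forall>N. submodule N R M \<longrightarrow> E \<subseteq> N \<or> N \<subseteq> D"
  shows "\<not> Ann R M D \<subseteq> Ann R M E"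
proof
  assume sub: "Ann R M D \<subseteq> Ann R M E"
  obtain y where y: "y \<in> E" "y \<noteq> \<zero>\<^bsub>M\<^esub>" using E_ne by blast
  have yc: "y \<in> carrier M" using y E_carr by auto
  have one: "\<exists>r\<in>carrier R. (\<forall>z\<in>E. r \<odot>\<^bsub>M\<^esub> z = z) \<and> r \<odot>\<^bsub>M\<^esub> x = \<zero>\<^bsub>M\<^esub>" if x: "x \<in> D" for x
  proof -
    have xc: "x \<in> carrier M" using x D_carr by auto
    let ?N = "(\<lambda>a. a \<odot>\<^bsub>M\<^esub> (y \<oplus>\<^bsub>M\<^esub> x)) ` carrier R"
    have Ns: "submodule ?N R M" using cyc_sub yc xc by simp
    have yx: "y \<oplus>\<^bsub>M\<^esub> x \<in> ?N" using yc xc by (metis R.one_closed image_eqI smult_one M.add.m_closed)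
    have "y \<oplus>\<^bsub>M\<^esub> x \<notin> D"
    proof
      assume "y \<oplus>\<^bsub>M\<^esub> x \<in> D"
      hence "(y \<oplus>\<^bsub>M\<^esub> x) \<oplus>\<^bsub>M\<^esub> (\<ominus>\<^bsub>M\<^esub> x) \<in> D" using D_add D_inv x by blast
      hence "y \<in> D" using yc xc by (simp add: M.add.m_assoc M.r_neg)
      thus False using intED y by blast
    qed
    hence "E \<subseteq> ?N" using B Ns yx by blast
    then obtain r where r: "r \<in> carrier R" "y = r \<odot>\<^bsub>M\<^esub> (y \<oplus>\<^bsub>M\<^esub> x)" using y by blast
    hence r2: "y = r \<odot>\<^bsub>M\<^esub> y \<oplus>\<^bsub>M\<^esub> r \<odot>\<^bsub>M\<^esub> x" using yc xc by (simp add: smult_r_distr)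
    have rx: "r \<odot>\<^bsub>M\<^esub> x = \<ominus>\<^bsub>M\<^esub> (r \<odot>\<^bsub>M\<^esub> y) \<oplus>\<^bsub>M\<^esub> y"
      using r2 r yc xc by (metis M.add.inv_solve_left smult_closed)
    have "r \<odot>\<^bsub>M\<^esub> x \<in> E" using rx E_add E_inv E_smult r y by simp
    moreover have "r \<odot>\<^bsub>M\<^esub> x \<in> D" using D_smult r x by simp
    ultimately have rx0: "r \<odot>\<^bsub>M\<^esub> x = \<zero>\<^bsub>M\<^esub>" using intED by blast
    hence "r \<odot>\<^bsub>M\<^esub> y = y" using r2 r yc by simp
    thus ?thesis using id_on_E[OF y r(1)] r rx0 by blast
  qed
  obtain S where S: "finite S" "S \<subseteq> D" "generated_submodule R M S = D"
    using fgD unfolding finitely_generated_submodule_def by blast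
  have "\<exists>r\<in>carrier R. (\<forall>z\<in>E. r \<odot>\<^bsub>M\<^esub> z = z) \<and> (\<forall>x\<in>S. r \<odot>\<^bsub>M\<^esub> x = \<zero>\<^bsub>M\<^esub>)"
    using S(1,2)
  proof (induction S rule: finite_induct)
    case empty
    then show ?case using E_carr by (intro bexI[of _ "\<one>\<^bsub>R\<^esub>"]) auto
  next
    case (insert x F)
    then obtain r where r: "r\<in>carrier R" "\<forall>z\<in>E. r \<odot>\<^bsub>M\<^esub> z = z" "\<forall>x\<in>F. r \<odot>\<^bsub>M\<^esub> x = \<zero>\<^bsub>M\<^esub>" by blast
    obtain t where t: "t\<in>carrier R" "\<forall>z\<in>E. t \<odot>\<^bsub>M\<^esub> z = z" "t \<odot>\<^bsub>M\<^esub> x = \<zero>\<^bsub>M\<^esub>"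
      using one insert by blast
    have xc: "x \<in> carrier M" using insert D_carr by auto
    have Fc: "F \<subseteq> carrier M" using insert D_carr by auto
    show ?case
    proof (intro bexI[of _ "r \<otimes>\<^bsub>R\<^esub> t"] conjI ballI)
      show "r \<otimes>\<^bsub>R\<^esub> t \<in> carrier R" using r t by simp
      show "(r \<otimes>\<^bsub>R\<^esub> t) \<odot>\<^bsub>M\<^esub> z = z" if "z \<in> E" for z
        using that r t E_carr by (auto simp: smult_assoc1)
      show "(r \<otimes>\<^bsub>R\<^esub> t) \<odot>\<^bsub>M\<^esub> w = \<zero>\<^bsub>M\<^esub>" if "w \<in> insert x F" for w
      proof (cases "w = x")
        case True then show ?thesis using r t xc by (simp add: smult_assoc1)
      next
        case False
        hence wF: "w \<in> F" using that by auto
        hence wc: "w \<in> carrier M" using Fc by auto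
        have "(r \<otimes>\<^bsub>R\<^esub> t) \<odot>\<^bsub>M\<^esub> w = (t \<otimes>\<^bsub>R\<^esub> r) \<odot>\<^bsub>M\<^esub> w" using r t by (simp add: R.m_comm)
        also have "\<dots> = \<zero>\<^bsub>M\<^esub>" using r t wc wF by (simp add: smult_assoc1)
        finally show ?thesis .
      qed
    qed
  qed
  then obtain r where r: "r\<in>carrier R" "\<forall>z\<in>E. r \<odot>\<^bsub>M\<^esub> z = z" "\<forall>x\<in>S. r \<odot>\<^bsub>M\<^esub> x = \<zero>\<^bsub>M\<^esub>" by blast
  have "S \<subseteq> {w \<in> carrier M. r \<odot>\<^bsub>M\<^esub> w = \<zero>\<^bsub>M\<^esub>}" using r S D_carr by auto
  hence "D \<subseteq> {w \<in> carrier M. r \<odot>\<^bsub>M\<^esub> w = \<zero>\<^bsub>M\<^esub>}"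
    using ann_sub[OF r(1)] S(3) unfolding generated_submodule_def by blast
  hence "r \<in> Ann R M D" using r unfolding Ann_def by auto
  hence "r \<in> Ann R M E" using sub by blast
  hence "r \<odot>\<^bsub>M\<^esub> y = \<zero>\<^bsub>M\<^esub>" using y unfolding Ann_def by auto
  thus False using r y by simp
qed

lemma dc:
  assumes d: "\<not> Ann R M D \<subseteq> Ann R M E"
  shows "carrier R = Ann R M E <+>\<^bsub>R\<^esub> Ann R M D"
proof -
  obtain b where b: "b \<in> Ann R M D" "b \<notin> Ann R M E" using d by blast
  have br: "b \<in> carrier R" using b unfolding Ann_def by auto
  then obtain z where z: "z \<in> E" "b \<odot>\<^bsub>M\<^esub> z \<noteq> \<zero>\<^bsub>M\<^esub>" using b unfolding Ann_def by auto
  have zc: "z \<in> carrier M" using z E_carr by auto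
  have bz: "b \<odot>\<^bsub>M\<^esub> z \<in> E" using E_smult br z by simp
  obtain s where s: "s \<in> carrier R" "z = s \<odot>\<^bsub>M\<^esub> (b \<odot>\<^bsub>M\<^esub> z)" using cyc[OF bz z(2)] z by blast
  have z0: "z \<noteq> \<zero>\<^bsub>M\<^esub>" using z br by auto
  have sb: "(s \<otimes>\<^bsub>R\<^esub> b) \<odot>\<^bsub>M\<^esub> z = z" using s br zc by (simp add: smult_assoc1)
  have idE: "\<forall>w\<in>E. (s \<otimes>\<^bsub>R\<^esub> b) \<odot>\<^bsub>M\<^esub> w = w" using id_on_E[OF z(1) z0 _ sb] s br by simp
  show ?thesis
  proof
    show "carrier R \<subseteq> Ann R M E <+>\<^bsub>R\<^esub> Ann R M D"
    proof
      fix r assume r: "r \<in> carrier R"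
      let ?u = "r \<ominus>\<^bsub>R\<^esub> r \<otimes>\<^bsub>R\<^esub> (s \<otimes>\<^bsub>R\<^esub> b)"
      let ?v = "(r \<otimes>\<^bsub>R\<^esub> s) \<otimes>\<^bsub>R\<^esub> b"
      have "?u \<in> Ann R M E" unfolding Ann_def
      proof (intro CollectI conjI ballI)
        show "?u \<in> carrier R" using r s br by simp
        fix w assume w: "w \<in> E"
        hence wc: "w \<in> carrier M" using E_carr by auto
        have "?u \<odot>\<^bsub>M\<^esub> w = r \<odot>\<^bsub>M\<^esub> w \<oplus>\<^bsub>M\<^esub> (\<ominus>\<^bsub>R\<^esub> (r \<otimes>\<^bsub>R\<^esub> (s \<otimes>\<^bsub>R\<^esub> b))) \<odot>\<^bsub>M\<^esub> w"
          using r s br wc by (simp add: R.minus_eq smult_l_distr)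
        also have "\<dots> = r \<odot>\<^bsub>M\<^esub> w \<oplus>\<^bsub>M\<^esub> \<ominus>\<^bsub>M\<^esub> (r \<odot>\<^bsub>M\<^esub> ((s \<otimes>\<^bsub>R\<^esub> b) \<odot>\<^bsub>M\<^esub> w))"
          using r s br wc by (simp add: smult_l_minus smult_assoc1)
        also have "\<dots> = \<zero>\<^bsub>M\<^esub>" using idE w r wc by (simp add: M.r_neg)
        finally show "?u \<odot>\<^bsub>M\<^esub> w = \<zero>\<^bsub>M\<^esub>" .
      qed
      moreover have "?v \<in> Ann R M D" unfolding Ann_def
      proof (intro CollectI conjI ballI)
        show "?v \<in> carrier R" using r s br by simp
        fix w assume w: "w \<in> D"
        hence wc: "w \<in> carrier M" using D_carr by auto
        have "b \<odot>\<^bsub>M\<^esub> w = \<zero>\<^bsub>M\<^esub>" using b w unfolding Ann_def by auto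
        thus "?v \<odot>\<^bsub>M\<^esub> w = \<zero>\<^bsub>M\<^esub>" using r s br wc by (simp add: smult_assoc1)
      qed
      moreover have "r = ?u \<oplus>\<^bsub>R\<^esub> ?v" using r s br by algebra
      ultimately show "r \<in> Ann R M E <+>\<^bsub>R\<^esub> Ann R M D" unfolding set_add_def' by blast
    qed
    show "Ann R M E <+>\<^bsub>R\<^esub> Ann R M D \<subseteq> carrier R"
      unfolding set_add_def' Ann_def by auto
  qed
qed

end

theorem lemma2p17:
  fixes R :: "('a, 'c) ring_scheme" and M :: "('a, 'b, 'd) module_scheme"
    and E D :: "'b set"
  assumes "module R M"
    and "simple_submodule R M E"
    and "finitely_generated_submodule R M D"
    and "E \<inter> D = {\<zero>\<^bsub>M\<^esub>}"
    and "E <+>\<^bsub>M\<^esub> D = carrier M"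
  shows "(strongly_hollow R M E \<longleftrightarrow>
            (\<forall>N. submodule N R M \<longrightarrow> E \<subseteq> N \<or> N \<subseteq> D))
       \<and> ((\<forall>N. submodule N R M \<longrightarrow> E \<subseteq> N \<or> N \<subseteq> D) \<longleftrightarrow>
            carrier R = Ann R M E <+>\<^bsub>R\<^esub> Ann R M D)
       \<and> (carrier R = Ann R M E <+>\<^bsub>R\<^esub> Ann R M D \<longleftrightarrow>
            \<not> Ann R M D \<subseteq> Ann R M E)"
proof -
  interpret ED R M E D using assms by (simp add: ED_def ED_axioms_def)
  show ?thesis using ab ba bd dc cb by blast
qed

end
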